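(* Let $N\cong\mathbb{Z}^3$ and let $P$ be a minimal Fano polytope in $N_\mathbb{R}$ which contains two triangles $T_1,T_2$, whose vertices are vertices of $P$, lying in distinct two-dimensional linear subspaces $L_1\ne L_2$, such that $T_1$ is equivalent (under an isomorphism of lattices $\mathbb{Z}^2\to N\cap L_1$) to $\mathrm{conv}\{(1,0),(0,1),(-1,-1)\}$ and $T_2$ is equivalent (under an isomorphism $\mathbb{Z}^2\to N\cap L_2$) to $\mathrm{conv}\{(1,0),(0,1),(-2,-1)\}$. Then, up to the action of $GL(3,\mathbb{Z})$, $P$ is the convex hull of the columns of $$\begin{pmatrix}1&0&0&-2&-1\\0&1&0&-1&0\\0&0&1&0&-1\end{pmatrix}.$$
   Context: A Fano polytope is a three-dimensional convex polytope $P\subset N_\mathbb{R}$ with vertices in $N$ such that the origin is the only lattice point in the interior of $P$. It is minimal if, for every vertex $\rho$ of $P$, the polytope $\mathrm{conv}((P\cap N)\setminus\{\rho\})$ is not a Fano polytope. Polytopes are identified up to $GL(3,\mathbb{Z})$ (after choosing a basis of $N$). *)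

theory Defs
  imports "HOL-Analysis.Analysis"
begin

text \<open>The lattice N = Z^3 inside N_R = R^3, and Z^2 inside R^2.\<close>
definition lattice3 :: "(real^3) set" where
  "lattice3 = {x. \<forall>i. x $ i \<in> \<int>}"

definition lattice2 :: "(real^2) set" where
  "lattice2 = {x. \<forall>i. x $ i \<in> \<int>}"

text \<open>A (three-dimensional) Fano polytope: the convex hull of finitely many lattice
  points such that the origin is the only lattice point in its interior
  (this forces full dimension).\<close>
definition fano_polytope :: "(real^3) set \<Rightarrow> bool" where
  "fano_polytope P \<longleftrightarrow>
     (\<exists>V. finite V \<and> V \<subseteq> lattice3 \<and> P = convex hull V) \<and>
     interior P \<inter> lattice3 = {0}"

text \<open>Vertices of a polytope = its extreme points.\<close>
definition vertices :: "(real^3) set \<Rightarrow> (real^3) set" where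
  "vertices P = {v. v extreme_point_of P}"

definition minimal_fano :: "(real^3) set \<Rightarrow> bool" where
  "minimal_fano P \<longleftrightarrow> fano_polytope P \<and>
     (\<forall>\<rho>\<in>vertices P. \<not> fano_polytope (convex hull ((P \<inter> lattice3) - {\<rho>})))"

text \<open>Lattice isomorphism Z^2 \<rightarrow> N \<inter> L (restriction of an injective linear map).\<close>
definition lattice_iso_onto :: "(real^2 \<Rightarrow> real^3) \<Rightarrow> (real^3) set \<Rightarrow> bool" where
  "lattice_iso_onto f L \<longleftrightarrow> linear f \<and> inj f \<and> f ` lattice2 = lattice3 \<inter> L"

text \<open>GL(3,Z): integer matrices with determinant \<plusminus>1.\<close>
definition GL3Z :: "(real^3^3) set" where
  "GL3Z = {A. (\<forall>i j. A $ i $ j \<in> \<int>) \<and> \<bar>det A\<bar> = 1}"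

end

theory Submission
  imports Defs "HOL-Analysis.Cross3"
begin


section \<open>Lattice basics\<close>

lemma lattice3_iff: "x \<in> lattice3 \<longleftrightarrow> x$1 \<in> \<int> \<and> x$2 \<in> \<int> \<and> x$3 \<in> \<int>"
  unfolding lattice3_def by (auto simp: forall_3)

lemma lattice3_0 [simp]: "0 \<in> lattice3"
  by (simp add: lattice3_iff)

lemma lattice3_add: "x \<in> lattice3 \<Longrightarrow> y \<in> lattice3 \<Longrightarrow> x + y \<in> lattice3"
  by (simp add: lattice3_iff)

lemma lattice3_diff: "x \<in> lattice3 \<Longrightarrow> y \<in> lattice3 \<Longrightarrow> x - y \<in> lattice3"
  by (simp add: lattice3_iff)

lemma lattice3_uminus: "x \<in> lattice3 \<Longrightarrow> - x \<in> lattice3"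
  by (simp add: lattice3_iff)

lemma lattice3_scale: "c \<in> \<int> \<Longrightarrow> x \<in> lattice3 \<Longrightarrow> c *\<^sub>R x \<in> lattice3"
  by (simp add: lattice3_iff)

lemma lattice3_inner: "x \<in> lattice3 \<Longrightarrow> y \<in> lattice3 \<Longrightarrow> x \<bullet> y \<in> \<int>"
  by (simp add: lattice3_iff inner_vec_def sum_3)

lemma lattice3_cross: "x \<in> lattice3 \<Longrightarrow> y \<in> lattice3 \<Longrightarrow> cross3 x y \<in> lattice3"
  by (simp add: lattice3_iff cross3_def)

lemma lattice3_finite:
  assumes "bounded S"
  shows "finite (S \<inter> lattice3)"
proof -
  obtain R where R: "\<And>x. x \<in> S \<Longrightarrow> norm x \<le> R"
    using assms bounded_iff by blast
  define k where "k = ceiling R"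
  define A where "A = (of_int ` {-k..k} :: real set)"
  have fA: "finite A" unfolding A_def by simp
  have "S \<inter> lattice3 \<subseteq> (\<lambda>(a,b,c). vector [a,b,c]) ` (A \<times> A \<times> A)"
  proof
    fix x assume x: "x \<in> S \<inter> lattice3"
    have comp: "x$i \<in> A" for i
    proof -
      have "x$i \<in> \<int>" using x unfolding lattice3_def by auto
      then obtain z where z: "x$i = of_int z" by (auto elim: Ints_cases)
      have "\<bar>x$i\<bar> \<le> R" using R[of x] x component_le_norm_cart[of x i] by auto
      then have "\<bar>z\<bar> \<le> k" using z unfolding k_def
        by (metis abs_le_iff le_of_int_ceiling linorder_not_le neg_le_iff_le of_int_abs of_int_le_iff order_trans)
      then show ?thesis using z unfolding A_def by (auto intro!: image_eqI[where x=z])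
    qed
    have "x = vector [x$1, x$2, x$3]"
      by (simp add: vec_eq_iff forall_3 vector_3)
    then show "x \<in> (\<lambda>(a,b,c). vector [a,b,c]) ` (A \<times> A \<times> A)"
      using comp by (auto intro!: image_eqI[where x="(x$1,x$2,x$3)"])
  qed
  then show ?thesis using fA by (meson finite_SigmaI finite_imageI finite_subset)
qed

section \<open>Convex combinations\<close>

lemma conv2: "convex C \<Longrightarrow> x \<in> C \<Longrightarrow> y \<in> C \<Longrightarrow> u \<ge> 0 \<Longrightarrow> v \<ge> 0 \<Longrightarrow> u + v = 1
   \<Longrightarrow> u *\<^sub>R x + v *\<^sub>R y \<in> C"
  by (rule convexD)

lemma conv3:
  assumes "convex C" "x \<in> C" "y \<in> C" "z \<in> C" "u \<ge> 0" "v \<ge> 0" "w \<ge> 0" "u + v + w = 1"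
  shows "u *\<^sub>R x + v *\<^sub>R y + w *\<^sub>R z \<in> C"
proof (cases "w = 1")
  case True
  then have h: "u = 0" "v = 0" using assms by auto
  show ?thesis using True assms h by simp
next
  case False
  then have w1: "1 - w > 0" using assms by auto
  have e: "u/(1-w) + v/(1-w) = 1"
    using assms w1 by (simp add: add_divide_distrib[symmetric])
  have i1: "(u/(1-w)) *\<^sub>R x + (v/(1-w)) *\<^sub>R y \<in> C"
    by (rule convexD) (use assms w1 e in auto)
  have "(1-w) *\<^sub>R ((u/(1-w)) *\<^sub>R x + (v/(1-w)) *\<^sub>R y) + w *\<^sub>R z \<in> C"
    by (rule convexD) (use assms w1 i1 in auto)
  also have "(1-w) *\<^sub>R ((u/(1-w)) *\<^sub>R x + (v/(1-w)) *\<^sub>R y) = u *\<^sub>R x + v *\<^sub>R y"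
    using w1 by (simp add: scaleR_add_right)
  finally show ?thesis .
qed

lemma conv4:
  assumes "convex C" "x \<in> C" "y \<in> C" "z \<in> C" "t \<in> C" "u \<ge> 0" "v \<ge> 0" "w \<ge> 0" "s \<ge> 0"
    "u + v + w + s = 1"
  shows "u *\<^sub>R x + v *\<^sub>R y + w *\<^sub>R z + s *\<^sub>R t \<in> C"
proof (cases "s = 1")
  case True
  then have h: "u = 0" "v = 0" "w = 0" using assms by auto
  show ?thesis using True assms h by simp
next
  case False
  then have w1: "1 - s > 0" using assms by auto
  have e: "u/(1-s) + v/(1-s) + w/(1-s) = 1"
    using assms w1 by (simp add: add_divide_distrib[symmetric])
  have i1: "(u/(1-s)) *\<^sub>R x + (v/(1-s)) *\<^sub>R y + (w/(1-s)) *\<^sub>R z \<in> C"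
    by (rule conv3) (use assms w1 e in auto)
  have "(1-s) *\<^sub>R ((u/(1-s)) *\<^sub>R x + (v/(1-s)) *\<^sub>R y + (w/(1-s)) *\<^sub>R z) + s *\<^sub>R t \<in> C"
    by (rule convexD) (use assms w1 i1 in auto)
  also have "(1-s) *\<^sub>R ((u/(1-s)) *\<^sub>R x + (v/(1-s)) *\<^sub>R y + (w/(1-s)) *\<^sub>R z) = u *\<^sub>R x + v *\<^sub>R y + w *\<^sub>R z"
    using w1 by (simp add: scaleR_add_right)
  finally show ?thesis .
qed

section \<open>Cones and interior\<close>

definition cn :: "(real^3) set \<Rightarrow> (real^3) set" where
  "cn C = {t *\<^sub>R x | t x. 0 \<le> t \<and> x \<in> C}"

lemma cn_sub: "x \<in> C \<Longrightarrow> x \<in> cn C"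
  unfolding cn_def by (rule CollectI, rule exI[of _ 1], rule exI[of _ x]) simp

lemma cn_scale: "x \<in> cn C \<Longrightarrow> c \<ge> 0 \<Longrightarrow> c *\<^sub>R x \<in> cn C"
  unfolding cn_def by (force intro: mult_nonneg_nonneg)

lemma cn_add:
  assumes "convex C" "0 \<in> C" "x \<in> cn C" "y \<in> cn C"
  shows "x + y \<in> cn C"
proof -
  obtain s a where a: "x = s *\<^sub>R a" "s \<ge> 0" "a \<in> C" using assms unfolding cn_def by auto
  obtain t b where b: "y = t *\<^sub>R b" "t \<ge> 0" "b \<in> C" using assms unfolding cn_def by auto
  show ?thesis
  proof (cases "s + t = 0")
    case True
    then have "s = 0" "t = 0" using a b by auto
    then have "x + y = 0" using a b by auto
    then show ?thesis using assms cn_sub by simp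
  next
    case False
    then have st: "s + t > 0" using a b by auto
    have e: "s/(s+t) + t/(s+t) = 1"
      using st by (simp add: add_divide_distrib[symmetric])
    have "(s/(s+t)) *\<^sub>R a + (t/(s+t)) *\<^sub>R b \<in> C"
      by (rule convexD) (use assms a b st e in auto)
    moreover have "x + y = (s+t) *\<^sub>R ((s/(s+t)) *\<^sub>R a + (t/(s+t)) *\<^sub>R b)"
      using a b st by (simp add: scaleR_add_right)
    ultimately show ?thesis unfolding cn_def using st by force
  qed
qed

lemma cn_shrink:
  assumes "convex C" "0 \<in> C" "v \<in> cn C" "v \<noteq> 0"
  obtains s where "s > 0" "\<And>s'. 0 \<le> s' \<Longrightarrow> s' \<le> s \<Longrightarrow> s' *\<^sub>R v \<in> C"
proof -
  obtain t a where a: "v = t *\<^sub>R a" "t \<ge> 0" "a \<in> C" using assms unfolding cn_def by auto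
  then have t: "t > 0" using assms by (cases "t = 0") auto
  have "s' *\<^sub>R v \<in> C" if "0 \<le> s'" "s' \<le> 1/t" for s'
  proof -
    have "(s' * t) *\<^sub>R a + (1 - s'*t) *\<^sub>R 0 \<in> C"
      by (rule convexD) (use assms a t that in \<open>auto simp: field_simps\<close>)
    then show ?thesis using a by simp
  qed
  then show ?thesis using that[of "1/t"] t by auto
qed

lemma pos_interior:
  fixes C :: "(real^3) set" and u1 u2 u3 :: "real^3"
  assumes C: "convex C" "0 \<in> C"
    and ind: "\<And>c1 c2 c3. c1 *\<^sub>R u1 + c2 *\<^sub>R u2 + c3 *\<^sub>R u3 = 0 \<Longrightarrow> c1 = 0 \<and> c2 = 0 \<and> c3 = 0"
    and h: "u1 \<in> cn C" "-u1 \<in> cn C" "u2 \<in> cn C" "-u2 \<in> cn C" "u3 \<in> cn C" "-u3 \<in> cn C"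
  shows "0 \<in> interior C"
proof -
  have nz: "u1 \<noteq> 0" "u2 \<noteq> 0" "u3 \<noteq> 0"
    using ind[of 1 0 0] ind[of 0 1 0] ind[of 0 0 1] by auto
  obtain s1 where s1: "s1 > 0" "\<And>s'. 0 \<le> s' \<Longrightarrow> s' \<le> s1 \<Longrightarrow> s' *\<^sub>R u1 \<in> C"
    using cn_shrink[OF C h(1)] nz by blast
  obtain s2 where s2: "s2 > 0" "\<And>s'. 0 \<le> s' \<Longrightarrow> s' \<le> s2 \<Longrightarrow> s' *\<^sub>R (-u1) \<in> C"
    using cn_shrink[OF C h(2)] nz by auto
  obtain s3 where s3: "s3 > 0" "\<And>s'. 0 \<le> s' \<Longrightarrow> s' \<le> s3 \<Longrightarrow> s' *\<^sub>R u2 \<in> C"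
    using cn_shrink[OF C h(3)] nz by blast
  obtain s4 where s4: "s4 > 0" "\<And>s'. 0 \<le> s' \<Longrightarrow> s' \<le> s4 \<Longrightarrow> s' *\<^sub>R (-u2) \<in> C"
    using cn_shrink[OF C h(4)] nz by auto
  obtain s5 where s5: "s5 > 0" "\<And>s'. 0 \<le> s' \<Longrightarrow> s' \<le> s5 \<Longrightarrow> s' *\<^sub>R u3 \<in> C"
    using cn_shrink[OF C h(5)] nz by blast
  obtain s6 where s6: "s6 > 0" "\<And>s'. 0 \<le> s' \<Longrightarrow> s' \<le> s6 \<Longrightarrow> s' *\<^sub>R (-u3) \<in> C"
    using cn_shrink[OF C h(6)] nz by auto
  define d where "d = min s1 (min s2 (min s3 (min s4 (min s5 s6))))"
  have d: "d > 0" using s1 s2 s3 s4 s5 s6 unfolding d_def by auto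
  define w1 where "w1 = d *\<^sub>R u1"
  define w2 where "w2 = d *\<^sub>R u2"
  define w3 where "w3 = d *\<^sub>R u3"
  have dle: "d \<le> s1" "d \<le> s2" "d \<le> s3" "d \<le> s4" "d \<le> s5" "d \<le> s6"
    unfolding d_def by linarith+
  have wC: "w1 \<in> C" "-w1 \<in> C" "w2 \<in> C" "-w2 \<in> C" "w3 \<in> C" "-w3 \<in> C"
    unfolding w1_def w2_def w3_def
    using s1(2)[OF _ dle(1)] s2(2)[OF _ dle(2)] s3(2)[OF _ dle(3)] s4(2)[OF _ dle(4)]
      s5(2)[OF _ dle(5)] s6(2)[OF _ dle(6)] d by auto
  define L where "L = (\<lambda>x::real^3. x$1 *\<^sub>R w1 + x$2 *\<^sub>R w2 + x$3 *\<^sub>R w3)"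
  have linL: "linear L"
    unfolding L_def by (intro linearI) (auto simp: algebra_simps)
  have injL: "inj L"
  proof (rule injI)
    fix x y assume "L x = L y"
    then have "((x$1 - y$1) * d) *\<^sub>R u1 + ((x$2 - y$2) * d) *\<^sub>R u2 + ((x$3 - y$3) * d) *\<^sub>R u3 = 0"
      unfolding L_def w1_def w2_def w3_def by (simp add: algebra_simps)
    from ind[OF this] d show "x = y" by (simp add: vec_eq_iff forall_3)
  qed
  define Ob where "Ob = {x::real^3. \<bar>x$1\<bar> + \<bar>x$2\<bar> + \<bar>x$3\<bar> < 1}"
  have oO: "open Ob" unfolding Ob_def
    by (intro open_Collect_less continuous_intros)
  have sub: "L ` Ob \<subseteq> C"
  proof
    fix y assume "y \<in> L ` Ob"
    then obtain x where x: "x \<in> Ob" "y = L x" by auto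
    define v1 where "v1 = (if x$1 \<ge> 0 then w1 else -w1)"
    define v2 where "v2 = (if x$2 \<ge> 0 then w2 else -w2)"
    define v3 where "v3 = (if x$3 \<ge> 0 then w3 else -w3)"
    have "\<bar>x$1\<bar> *\<^sub>R v1 + \<bar>x$2\<bar> *\<^sub>R v2 + \<bar>x$3\<bar> *\<^sub>R v3 + (1 - (\<bar>x$1\<bar> + \<bar>x$2\<bar> + \<bar>x$3\<bar>)) *\<^sub>R 0 \<in> C"
      by (rule conv4) (use x wC C in \<open>auto simp: Ob_def v1_def v2_def v3_def\<close>)
    moreover have "\<bar>x$1\<bar> *\<^sub>R v1 + \<bar>x$2\<bar> *\<^sub>R v2 + \<bar>x$3\<bar> *\<^sub>R v3 = L x"
      unfolding L_def v1_def v2_def v3_def by (auto simp: abs_if)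
    ultimately show "y \<in> C" using x by simp
  qed
  have "interior (L ` Ob) = L ` interior Ob"
    by (rule interior_injective_linear_image[OF linL injL])
  also have "\<dots> = L ` Ob" using oO by (simp add: interior_open)
  finally have "L ` Ob \<subseteq> interior C" using sub
    by (metis interior_mono)
  moreover have "L 0 = 0" unfolding L_def by simp
  moreover have "(0::real^3) \<in> Ob" unfolding Ob_def by simp
  ultimately show ?thesis by (metis image_eqI subsetD)
qed



lemma cramer3: fixes p q x :: "real^3"
  shows "(cross3 p q \<bullet> cross3 p q) *\<^sub>R x = (cross3 x q \<bullet> cross3 p q) *\<^sub>R p + (cross3 p x \<bullet> cross3 p q) *\<^sub>R q + (cross3 p q \<bullet> x) *\<^sub>R cross3 p q"
  unfolding cross3_def inner_vec_def sum_3 vec_eq_iff forall_3 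
  by (simp add: algebra_simps) 

lemma cross_nz:
  fixes p q :: "real^3"
  assumes ind: "\<And>s t. s *\<^sub>R p + t *\<^sub>R q = 0 \<Longrightarrow> s = 0 \<and> t = 0"
  shows "cross3 p q \<noteq> 0"
proof
  assume h: "cross3 p q = 0"
  have "cross3 q (cross3 p q) = (q \<bullet> q) *\<^sub>R p - (q \<bullet> p) *\<^sub>R q"
    by (rule Lagrange)
  then have "(q \<bullet> q) *\<^sub>R p + (- (q \<bullet> p)) *\<^sub>R q = 0" using h by simp
  then have "q \<bullet> q = 0" using ind by blast
  then have "q = 0" by simp
  then have "0 *\<^sub>R p + 1 *\<^sub>R q = 0" by simp
  from ind[OF this] show False by simp
qed

lemma cross_dot_p: "cross3 p q \<bullet> p = 0" "cross3 p q \<bullet> q = 0"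
  by (simp_all add: cross3_def inner_vec_def sum_3 algebra_simps)

lemma in_plane:
  fixes p q w :: "real^3"
  assumes "cross3 p q \<noteq> 0" "cross3 p q \<bullet> w = 0"
  obtains \<alpha> \<beta> where "w = \<alpha> *\<^sub>R p + \<beta> *\<^sub>R q"
proof -
  let ?n = "cross3 p q"
  have nn: "?n \<bullet> ?n > 0" using assms by simp
  have "(?n \<bullet> ?n) *\<^sub>R w = (cross3 w q \<bullet> ?n) *\<^sub>R p + (cross3 p w \<bullet> ?n) *\<^sub>R q"
    using cramer3[of p q w] assms by simp
  then have "(1/(?n \<bullet> ?n)) *\<^sub>R ((?n \<bullet> ?n) *\<^sub>R w) = (1/(?n \<bullet> ?n)) *\<^sub>R ((cross3 w q \<bullet> ?n) *\<^sub>R p + (cross3 p w \<bullet> ?n) *\<^sub>R q)"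
    by simp
  then have "w = ((cross3 w q \<bullet> ?n)/(?n \<bullet> ?n)) *\<^sub>R p + ((cross3 p w \<bullet> ?n)/(?n \<bullet> ?n)) *\<^sub>R q"
    using nn by (simp add: scaleR_add_right)
  then show ?thesis using that by blast
qed

lemma bint:
  fixes p q r y z :: "real^3" and X :: "(real^3) set"
  assumes ind: "\<And>s t. s *\<^sub>R p + t *\<^sub>R q = 0 \<Longrightarrow> s = 0 \<and> t = 0"
    and lam: "la > 0" "mu > 0" and r: "r = - (la *\<^sub>R p) - mu *\<^sub>R q"
    and sy: "cross3 p q \<bullet> y < 0" and sz: "cross3 p q \<bullet> z > 0"
    and X: "p \<in> X" "q \<in> X" "r \<in> X" "y \<in> X" "z \<in> X"
  shows "0 \<in> interior (convex hull X)"
proof -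
  define C where "C = convex hull X"
  let ?n = "cross3 p q"
  have cC: "convex C" unfolding C_def by simp
  have inC: "p \<in> C" "q \<in> C" "r \<in> C" "y \<in> C" "z \<in> C"
    using X unfolding C_def by (auto intro: hull_inc)
  have s1: "la/(1+la+mu) + mu/(1+la+mu) + 1/(1+la+mu) = 1"
    using lam by (simp add: add_divide_distrib[symmetric])
  have "(la/(1+la+mu)) *\<^sub>R p + (mu/(1+la+mu)) *\<^sub>R q + (1/(1+la+mu)) *\<^sub>R r \<in> C"
    by (rule conv3) (use cC inC lam s1 in auto)
  moreover have "(la/(1+la+mu)) *\<^sub>R p + (mu/(1+la+mu)) *\<^sub>R q + (1/(1+la+mu)) *\<^sub>R r = 0"
    unfolding r by (simp add: algebra_simps)
  ultimately have C0: "0 \<in> C" by simp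
  have kp: "p \<in> cn C" "q \<in> cn C" "r \<in> cn C" "y \<in> cn C" "z \<in> cn C"
    using inC cn_sub by auto
  have "- p = (1/la) *\<^sub>R (mu *\<^sub>R q + r)"
    unfolding r using lam by (simp add: algebra_simps)
  moreover have "(1/la) *\<^sub>R (mu *\<^sub>R q + r) \<in> cn C"
    using lam kp by (intro cn_scale cn_add[OF cC C0]) auto
  ultimately have mp: "-p \<in> cn C" by simp
  have "- q = (1/mu) *\<^sub>R (la *\<^sub>R p + r)"
    unfolding r using lam by (simp add: algebra_simps)
  moreover have "(1/mu) *\<^sub>R (la *\<^sub>R p + r) \<in> cn C"
    using lam kp by (intro cn_scale cn_add[OF cC C0]) auto
  ultimately have mq: "-q \<in> cn C" by simp
  have lin1: "a *\<^sub>R v \<in> cn C" if "v \<in> cn C" "-v \<in> cn C" for a v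
  proof (cases "a \<ge> 0")
    case True then show ?thesis using that cn_scale by auto
  next
    case False
    then have "(-a) *\<^sub>R (-v) \<in> cn C" using cn_scale[OF that(2), of "-a"] by simp
    then show ?thesis by simp
  qed
  have spn: "a *\<^sub>R p + b *\<^sub>R q \<in> cn C" for a b
    using lin1[of p a] lin1[of q b] kp mp mq by (intro cn_add[OF cC C0]) auto
  have nz: "?n \<noteq> 0" by (rule cross_nz[OF ind])
  define w where "w = (?n \<bullet> z) *\<^sub>R y - (?n \<bullet> y) *\<^sub>R z"
  have "?n \<bullet> w = 0" unfolding w_def by (simp add: inner_diff_right algebra_simps)
  then obtain \<alpha> \<beta> where ab: "w = \<alpha> *\<^sub>R p + \<beta> *\<^sub>R q" using in_plane[OF nz] by blast
  have mw: "- w \<in> cn C" using spn[of "-\<alpha>" "-\<beta>"] ab by simp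
  have "(?n \<bullet> z) *\<^sub>R y + - w \<in> cn C"
    using sz kp mw by (intro cn_add[OF cC C0] cn_scale) auto
  then have "(1/(- (?n \<bullet> y))) *\<^sub>R ((?n \<bullet> z) *\<^sub>R y + - w) \<in> cn C"
    using sy by (intro cn_scale) auto
  moreover have "(1/(- (?n \<bullet> y))) *\<^sub>R ((?n \<bullet> z) *\<^sub>R y + - w) = - z"
    unfolding w_def using sy by (simp add: algebra_simps)
  ultimately have mz: "-z \<in> cn C" by simp
  have ind3: "c1 = 0 \<and> c2 = 0 \<and> c3 = 0" if "c1 *\<^sub>R p + c2 *\<^sub>R q + c3 *\<^sub>R z = 0" for c1 c2 c3
  proof -
    have "?n \<bullet> (c1 *\<^sub>R p + c2 *\<^sub>R q + c3 *\<^sub>R z) = c3 * (?n \<bullet> z)"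
      by (simp add: inner_add_right cross_dot_p)
    then have "c3 = 0" using that sz by simp
    then show ?thesis using that ind by auto
  qed
  show ?thesis unfolding C_def[symmetric]
    using pos_interior[of C p q z] cC C0 ind3 kp mp mq mz by blast
qed

lemma rem:
  assumes mf: "minimal_fano P" and rho: "\<rho> \<in> vertices P" and X: "X \<subseteq> P \<inter> lattice3"
    and nX: "\<rho> \<notin> X" and int0: "0 \<in> interior (convex hull X)"
  shows False
proof -
  have fP: "fano_polytope P" and nf: "\<not> fano_polytope (convex hull ((P \<inter> lattice3) - {\<rho>}))"
    using mf rho unfolding minimal_fano_def by auto
  obtain V where V: "finite V" "V \<subseteq> lattice3" "P = convex hull V"
    and iP: "interior P \<inter> lattice3 = {0}"
    using fP unfolding fano_polytope_def by auto
  have bP: "bounded P" using V by (simp add: finite_imp_bounded_convex_hull)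
  have cP: "convex P" using V by simp
  define V' where "V' = (P \<inter> lattice3) - {\<rho>}"
  have fV': "finite V'" unfolding V'_def using lattice3_finite[OF bP] by simp
  have sub: "convex hull V' \<subseteq> P" unfolding V'_def using cP by (intro hull_minimal) auto
  have XV: "X \<subseteq> V'" using X nX unfolding V'_def by auto
  have "0 \<in> interior (convex hull V')"
    using int0 hull_mono[OF XV] interior_mono by blast
  moreover have "interior (convex hull V') \<subseteq> interior P" using sub by (rule interior_mono)
  ultimately have "interior (convex hull V') \<inter> lattice3 = {0}" using iP by auto
  moreover have "V' \<subseteq> lattice3" unfolding V'_def by auto
  ultimately have "fano_polytope (convex hull V')"
    unfolding fano_polytope_def using fV' by blast
  then show False using nf unfolding V'_def by simp
qed

lemma sign3:
  fixes x1 x2 x3 :: real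
  assumes "x1 + x2 + x3 = 0" "\<not> (x1 = 0 \<and> x2 = 0)"
  shows "(x2 < 0 \<and> 0 < x3) \<or> (x3 < 0 \<and> 0 < x2) \<or> (x1 < 0 \<and> 0 < x3) \<or> (x3 < 0 \<and> 0 < x1)
       \<or> (x1 < 0 \<and> 0 < x2) \<or> (x2 < 0 \<and> 0 < x1)"
  using assms by linarith



lemma lin2:
  fixes f :: "real^2 \<Rightarrow> real^3"
  assumes "linear f"
  shows "f x = (x$1) *\<^sub>R f (vector [1,0]) + (x$2) *\<^sub>R f (vector [0,1])"
proof -
  have "x = (x$1) *\<^sub>R (vector [1,0] :: real^2) + (x$2) *\<^sub>R vector [0,1]"
    by (simp add: vec_eq_iff forall_2 vector_2)
  then have "f x = f ((x$1) *\<^sub>R (vector [1,0] :: real^2) + (x$2) *\<^sub>R vector [0,1])" by simp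
  also have "\<dots> = (x$1) *\<^sub>R f (vector [1,0]) + (x$2) *\<^sub>R f (vector [0,1])"
    using assms by (simp add: linear_add linear_scale)
  finally show ?thesis .
qed

lemma tri_setup:
  fixes f :: "real^2 \<Rightarrow> real^3" and L :: "(real^3) set"
  assumes L: "subspace L" "dim L = 2" and iso: "lattice_iso_onto f L"
  defines "a \<equiv> f (vector [1,0])" and "b \<equiv> f (vector [0,1])"
  shows "a \<in> lattice3" "b \<in> lattice3"
    and "\<And>s t. s *\<^sub>R a + t *\<^sub>R b = 0 \<Longrightarrow> s = 0 \<and> t = 0"
    and "\<And>x. x \<in> L \<longleftrightarrow> (\<exists>s t. x = s *\<^sub>R a + t *\<^sub>R b)"
    and "\<And>x s t. x \<in> lattice3 \<Longrightarrow> x = s *\<^sub>R a + t *\<^sub>R b \<Longrightarrow> s \<in> \<int> \<and> t \<in> \<int>"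
    and "\<And>x. f x = (x$1) *\<^sub>R a + (x$2) *\<^sub>R b"
proof -
  have lin: "linear f" and inj: "inj f" and img: "f ` lattice2 = lattice3 \<inter> L"
    using iso unfolding lattice_iso_onto_def by auto
  show fx: "\<And>x. f x = (x$1) *\<^sub>R a + (x$2) *\<^sub>R b" unfolding a_def b_def by (rule lin2[OF lin])
  have l10: "(vector [1,0] :: real^2) \<in> lattice2" "(vector [0,1] :: real^2) \<in> lattice2"
    unfolding lattice2_def by (auto simp: forall_2 vector_2)
  show "a \<in> lattice3" "b \<in> lattice3" using img l10 unfolding a_def b_def by blast+
  have aL: "a \<in> L" "b \<in> L" using img l10 unfolding a_def b_def by blast+
  show ind: "\<And>s t. s *\<^sub>R a + t *\<^sub>R b = 0 \<Longrightarrow> s = 0 \<and> t = 0"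
  proof -
    fix s t assume h: "s *\<^sub>R a + t *\<^sub>R b = 0"
    have "f (vector [s,t]) = f 0" using h fx[of "vector [s,t]"] lin by (simp add: vector_2 linear_0)
    then have "(vector [s,t] :: real^2) = 0" using inj by (meson injD)
    then show "s = 0 \<and> t = 0" by (simp add: vec_eq_iff forall_2 vector_2)
  qed
  have rsub: "range f \<subseteq> L"
  proof
    fix y assume "y \<in> range f"
    then obtain x where "y = f x" by auto
    then show "y \<in> L" using fx[of x] aL L(1) by (simp add: subspace_add subspace_scale)
  qed
  have "subspace (range f)" using lin by (simp add: linear_subspace_image)
  moreover have "dim (range f) = 2"
  proof -
    have "dim (f ` UNIV) = dim (UNIV :: (real^2) set)"
      using lin inj by (intro dim_image_eq) (auto simp: inj_on_def dest: injD)
    then show ?thesis by simp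
  qed
  ultimately have rL: "range f = L" using rsub L by (intro subspace_dim_equal) auto
  show Liff: "\<And>x. x \<in> L \<longleftrightarrow> (\<exists>s t. x = s *\<^sub>R a + t *\<^sub>R b)"
  proof
    fix x assume "x \<in> L"
    then obtain w where "x = f w" using rL by auto
    then show "\<exists>s t. x = s *\<^sub>R a + t *\<^sub>R b" using fx by blast
  next
    fix x assume "\<exists>s t. x = s *\<^sub>R a + t *\<^sub>R b"
    then obtain s t where "x = s *\<^sub>R a + t *\<^sub>R b" by auto
    then have "x = f (vector [s,t])" using fx by (simp add: vector_2)
    then show "x \<in> L" using rL by auto
  qed
  show "\<And>x s t. x \<in> lattice3 \<Longrightarrow> x = s *\<^sub>R a + t *\<^sub>R b \<Longrightarrow> s \<in> \<int> \<and> t \<in> \<int>"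
  proof -
    fix x s t assume x: "x \<in> lattice3" "x = s *\<^sub>R a + t *\<^sub>R b"
    then have "x \<in> L" using Liff by blast
    then obtain w where w: "w \<in> lattice2" "x = f w" using img x by blast
    then have "(s - w$1) *\<^sub>R a + (t - w$2) *\<^sub>R b = 0" using fx[of w] x by (simp add: algebra_simps)
    from ind[OF this] have "s = w$1" "t = w$2" by auto
    moreover have "w$1 \<in> \<int>" "w$2 \<in> \<int>" using w unfolding lattice2_def by auto
    ultimately show "s \<in> \<int> \<and> t \<in> \<int>" by simp
  qed
qed

lemma rep_mod:
  fixes k lo i :: int
  assumes "k > 0"
  shows "\<exists>u. lo \<le> u \<and> u \<le> lo + k - 1 \<and> k dvd (u - i)"
proof -
  define u where "u = lo + (i - lo) mod k"
  have b: "0 \<le> (i - lo) mod k" "(i - lo) mod k < k" using assms by auto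
  have e: "(i - lo) = k * ((i - lo) div k) + (i - lo) mod k" by simp
  have "u - i = k * (- ((i - lo) div k))" unfolding u_def using e by (simp add: algebra_simps)
  then have "k dvd (u - i)" by (metis dvd_triv_left)
  moreover have "lo \<le> u" "u \<le> lo + k - 1" unfolding u_def using b by auto
  ultimately show ?thesis by blast
qed

lemma cover:
  fixes k i j :: int
  assumes k: "k \<ge> 2"
  shows "\<exists>u v. k dvd (u - i) \<and> k dvd (v - j) \<and> u + v \<le> k - 1 \<and> v - u \<le> k - 1
              \<and> - (k - 1) \<le> u \<and> u - 2 * v \<le> k - 1"
proof -
  obtain v0 where v0: "0 \<le> v0" "v0 \<le> k - 1" "k dvd (v0 - j)" using rep_mod[of k 0 j] k by auto
  show ?thesis
  proof (cases "2 * v0 \<le> k - 1")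
    case True
    obtain u where u: "v0 - k + 1 \<le> u" "u \<le> v0" "k dvd (u - i)"
      using rep_mod[of k "v0 - k + 1" i] k by auto
    have "u + v0 \<le> k - 1 \<and> v0 - u \<le> k - 1 \<and> - (k - 1) \<le> u \<and> u - 2 * v0 \<le> k - 1"
      using True u v0 by linarith
    then show ?thesis using u(3) v0(3) by blast
  next
    case False
    obtain u where u: "- (k - 1) \<le> u" "u \<le> 0" "k dvd (u - i)"
      using rep_mod[of k "- (k - 1)" i] k by auto
    show ?thesis
    proof (cases "u = 0")
      case True
      have "u + v0 \<le> k - 1 \<and> v0 - u \<le> k - 1 \<and> - (k - 1) \<le> u \<and> u - 2 * v0 \<le> k - 1"
        using True u v0 k by linarith
      then show ?thesis using u(3) v0(3) by blast
    next
      case F2: False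
      have d: "k dvd (v0 - k - j)"
      proof -
        have "v0 - k - j = (v0 - j) - k" by simp
        then show ?thesis using v0(3) by (metis dvd_diff dvd_refl)
      qed
      have "u + (v0 - k) \<le> k - 1 \<and> (v0 - k) - u \<le> k - 1 \<and> - (k - 1) \<le> u \<and> u - 2 * (v0 - k) \<le> k - 1"
        using F2 u v0 k False by (simp add: order_le_less) linarith
      then show ?thesis using u(3) d by blast
    qed
  qed
qed



lemma core4_gen:
  fixes P :: "(real^3) set" and p q e n :: "real^3"
  assumes mf: "minimal_fano P"
    and PS: "P = convex hull {p, q, -p-q, e, -(2 *\<^sub>R p) - e}"
    and ve: "e \<in> vertices P"
    and lat: "p \<in> lattice3" "q \<in> lattice3" "e \<in> lattice3"
    and ind: "\<And>s t. s *\<^sub>R p + t *\<^sub>R q = 0 \<Longrightarrow> s = 0 \<and> t = 0"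
    and sat: "\<And>x s t. x \<in> lattice3 \<Longrightarrow> x = s *\<^sub>R p + t *\<^sub>R q \<Longrightarrow> s \<in> \<int> \<and> t \<in> \<int>"
    and nd: "n = cross3 p q \<or> n = cross3 q p"
    and pos: "n \<bullet> e > 0"
  shows "\<forall>x\<in>lattice3. \<exists>i j l. i \<in> \<int> \<and> j \<in> \<int> \<and> l \<in> \<int> \<and> x = i *\<^sub>R p + j *\<^sub>R e + l *\<^sub>R q"
proof -
  define c0 where "c0 = n \<bullet> e"
  define r where "r = -p-q"
  define g where "g = -(2 *\<^sub>R p) - e"
  have c0: "c0 > 0" using pos unfolding c0_def by simp
  have ind': "\<And>s t. s *\<^sub>R q + t *\<^sub>R p = 0 \<Longrightarrow> s = 0 \<and> t = 0"
    using ind by (metis add.commute)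
  have cP: "convex P" unfolding PS by simp
  have inP: "p \<in> P" "q \<in> P" "r \<in> P" "e \<in> P" "g \<in> P"
    unfolding PS r_def g_def by (auto intro: hull_inc)
  have "(1/2) *\<^sub>R e + (1/2) *\<^sub>R g \<in> P"
    by (rule convexD) (use cP inP in auto)
  moreover have "(1/2) *\<^sub>R e + (1/2) *\<^sub>R g = - p" unfolding g_def by (simp add: algebra_simps)
  ultimately have mpP: "-p \<in> P" by simp
  have latrg: "r \<in> lattice3" "g \<in> lattice3"
    unfolding r_def g_def using lat
    by (auto intro!: lattice3_diff lattice3_uminus lattice3_scale[of 2, simplified])
  have np: "n \<bullet> p = 0" "n \<bullet> q = 0" using nd cross_dot_p by auto
  have nr: "n \<bullet> r = 0" unfolding r_def using np by (simp add: inner_diff_right)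
  have ng: "n \<bullet> g = - c0" unfolding g_def c0_def using np by (simp add: inner_diff_right)
  have nz: "n \<noteq> 0" using nd cross_nz[OF ind] cross_nz[OF ind'] by auto
  have M1: False if m: "m \<in> P" "m \<in> lattice3" "0 < n \<bullet> m" "n \<bullet> m < c0" for m
  proof -
    have "e \<notin> {p, q, r, g, m}" using np nr ng c0 m(4) unfolding c0_def by auto
    moreover have "{p, q, r, g, m} \<subseteq> P \<inter> lattice3" using inP latrg lat m by auto
    moreover have "0 \<in> interior (convex hull {p, q, r, g, m})"
      using nd
    proof
      assume "n = cross3 p q"
      then show ?thesis
        by (intro bint[of p q 1 1 r g m]) (use ind c0 ng m(3) in \<open>auto simp: r_def\<close>)
    next
      assume "n = cross3 q p"
      then have "0 \<in> interior (convex hull {q, p, r, g, m})"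
        by (intro bint[of q p 1 1 r g m]) (use ind' c0 ng m(3) in \<open>auto simp: r_def\<close>)
      moreover have "{q, p, r, g, m} = {p, q, r, g, m}" by auto
      ultimately show ?thesis by simp
    qed
    ultimately show False using rem[OF mf ve] by blast
  qed
  have intv: "n \<bullet> x \<in> \<int>" if "x \<in> lattice3" for x
    using nd lat that by (auto intro!: lattice3_inner lattice3_cross)
  have plane: "\<exists>i l. i \<in> \<int> \<and> l \<in> \<int> \<and> x = i *\<^sub>R p + l *\<^sub>R q" if xL: "x \<in> lattice3" and xn: "n \<bullet> x = 0" for x
  proof -
    have "\<exists>\<alpha> \<beta>. x = \<alpha> *\<^sub>R p + \<beta> *\<^sub>R q"
      using nd
    proof
      assume "n = cross3 p q"
      then show ?thesis using in_plane[of p q x] nz xn by metis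
    next
      assume "n = cross3 q p"
      then obtain \<alpha> \<beta> where "x = \<alpha> *\<^sub>R q + \<beta> *\<^sub>R p" using in_plane[of q p x] nz xn by metis
      then show ?thesis by (metis add.commute)
    qed
    then show ?thesis using sat[OF xL] by blast
  qed
  obtain c :: int where cc: "c0 = of_int c" using intv[OF lat(3)] unfolding c0_def by (auto elim: Ints_cases)
  have cpos: "c > 0" using c0 cc by simp
  define S where "S = {t::nat. 0 < t \<and> (\<exists>m\<in>lattice3. n \<bullet> m = real t)}"
  have cS: "nat c \<in> S" unfolding S_def using cpos cc lat(3) unfolding c0_def
    by (auto intro!: bexI[of _ e])
  define t0 where "t0 = (LEAST t. t \<in> S)"
  have t0S: "t0 \<in> S" unfolding t0_def using cS by (rule LeastI)
  have t0min: "t0 \<le> t" if "t \<in> S" for t unfolding t0_def using that by (rule Least_le)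
  obtain m0 where m0: "m0 \<in> lattice3" "n \<bullet> m0 = real t0" "t0 > 0" using t0S unfolding S_def by auto
  have D: "int t0 dvd z" if "m \<in> lattice3" "n \<bullet> m = of_int z" for m z
  proof -
    define qq where "qq = z div int t0"
    define rr where "rr = z mod int t0"
    have zq: "z = int t0 * qq + rr" unfolding qq_def rr_def by simp
    have rr: "0 \<le> rr" "rr < int t0" unfolding rr_def using m0(3) by auto
    define m' where "m' = m - of_int qq *\<^sub>R m0"
    have m'L: "m' \<in> lattice3" unfolding m'_def using that m0 by (intro lattice3_diff lattice3_scale) auto
    have "n \<bullet> m' = of_int z - of_int qq * real t0" unfolding m'_def using that m0 by (simp add: inner_diff_right)
    also have "\<dots> = of_int rr" unfolding zq by (simp add: algebra_simps)
    finally have nm': "n \<bullet> m' = of_int rr" .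
    have "rr = 0"
    proof (rule ccontr)
      assume "rr \<noteq> 0"
      then have "nat rr \<in> S" unfolding S_def using rr nm' m'L by (auto intro!: bexI[of _ m'])
      then have "t0 \<le> nat rr" by (rule t0min)
      then show False using rr by linarith
    qed
    then show ?thesis using zq by simp
  qed
  obtain k where ck: "c = int t0 * k" using D[OF lat(3), of c] cc unfolding c0_def by (auto elim: dvdE)
  have k1: "k \<ge> 1"
  proof -
    have "0 < int t0 * k" using ck cpos by simp
    then have "k > 0" using m0(3) by (simp add: zero_less_mult_iff)
    then show ?thesis by simp
  qed
  show ?thesis
  proof (cases "k = 1")
    case True
    show ?thesis
    proof
      fix x assume x: "x \<in> lattice3"
      obtain z where z: "n \<bullet> x = of_int z" using intv[OF x] by (auto elim: Ints_cases)
      have "int t0 dvd z" by (rule D[OF x z])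
      then obtain j where j: "z = c * j" using ck True by (auto elim!: dvdE)
      define y where "y = x - of_int j *\<^sub>R e"
      have yL: "y \<in> lattice3" unfolding y_def using x lat by (intro lattice3_diff lattice3_scale) auto
      have "n \<bullet> y = 0" unfolding y_def using z j cc unfolding c0_def by (simp add: inner_diff_right)
      then obtain i l where il: "i \<in> \<int>" "l \<in> \<int>" "y = i *\<^sub>R p + l *\<^sub>R q" using plane[OF yL] by blast
      have "x = i *\<^sub>R p + of_int j *\<^sub>R e + l *\<^sub>R q" using il(3) unfolding y_def by (simp add: algebra_simps)
      then show "\<exists>i j l. i \<in> \<int> \<and> j \<in> \<int> \<and> l \<in> \<int> \<and> x = i *\<^sub>R p + j *\<^sub>R e + l *\<^sub>R q"
        using il Ints_of_int by blast
    qed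
  next
    case False
    then have k2: "k \<ge> 2" using k1 by simp
    define kr where "kr = real_of_int k"
    have kr2: "kr \<ge> 2" unfolding kr_def using k2 by simp
    define w where "w = kr *\<^sub>R m0 - e"
    have wL: "w \<in> lattice3" unfolding w_def kr_def using m0 lat by (intro lattice3_diff lattice3_scale) auto
    have "n \<bullet> w = kr * real t0 - c0" unfolding w_def using m0 c0_def by (simp add: inner_diff_right)
    also have "\<dots> = 0" unfolding kr_def cc ck by simp
    finally obtain i0 j0 where ij0: "i0 \<in> \<int>" "j0 \<in> \<int>" "w = i0 *\<^sub>R p + j0 *\<^sub>R q" using plane[OF wL] by blast
    obtain ii where ii: "i0 = of_int ii" using ij0 by (auto elim: Ints_cases)
    obtain jj where jj: "j0 = of_int jj" using ij0 by (auto elim: Ints_cases)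
    obtain u v where uv: "k dvd (u - ii)" "k dvd (v - jj)" "u + v \<le> k - 1" "v - u \<le> k - 1"
      "- (k - 1) \<le> u" "u - 2 * v \<le> k - 1"
      using cover[OF k2] by blast
    obtain s1 where s1: "u - ii = k * s1" using uv(1) by (auto elim: dvdE)
    obtain s3 where s3: "v - jj = k * s3" using uv(2) by (auto elim: dvdE)
    define ur where "ur = real_of_int u"
    define vr where "vr = real_of_int v"
    have ineq: "ur + vr \<le> kr - 1" "vr - ur \<le> kr - 1" "- (kr - 1) \<le> ur" "ur - 2 * vr \<le> kr - 1"
    proof -
      have "real_of_int (u + v) \<le> real_of_int (k - 1)" using uv(3) by (simp only: of_int_le_iff)
      then show "ur + vr \<le> kr - 1" unfolding ur_def vr_def kr_def by simp
      have "real_of_int (v - u) \<le> real_of_int (k - 1)" using uv(4) by (simp only: of_int_le_iff)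
      then show "vr - ur \<le> kr - 1" unfolding ur_def vr_def kr_def by simp
      have "real_of_int (- (k - 1)) \<le> real_of_int u" using uv(5) by (simp only: of_int_le_iff)
      then show "- (kr - 1) \<le> ur" unfolding ur_def vr_def kr_def by simp
      have "real_of_int (u - 2 * v) \<le> real_of_int (k - 1)" using uv(6) by (simp only: of_int_le_iff)
      then show "ur - 2 * vr \<le> kr - 1" unfolding ur_def vr_def kr_def by simp
    qed
    define m' where "m' = m0 + of_int s1 *\<^sub>R p + of_int s3 *\<^sub>R q"
    have m'L: "m' \<in> lattice3" unfolding m'_def using m0 lat
      by (intro lattice3_add lattice3_scale) auto
    have s1r: "ur = i0 + kr * of_int s1"
    proof -
      have "u = ii + k * s1" using s1 by simp
      then show ?thesis unfolding ur_def ii kr_def by simp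
    qed
    have s3r: "vr = j0 + kr * of_int s3"
    proof -
      have "v = jj + k * s3" using s3 by simp
      then show ?thesis unfolding vr_def jj kr_def by simp
    qed
    have "kr *\<^sub>R m' = kr *\<^sub>R m0 + (kr * of_int s1) *\<^sub>R p + (kr * of_int s3) *\<^sub>R q"
      unfolding m'_def by (simp add: algebra_simps)
    also have "kr *\<^sub>R m0 = e + i0 *\<^sub>R p + j0 *\<^sub>R q" using ij0(3) unfolding w_def by (simp add: algebra_simps)
    finally have "kr *\<^sub>R m' = e + ur *\<^sub>R p + vr *\<^sub>R q" unfolding s1r s3r by (simp add: algebra_simps)
    then have "(1/kr) *\<^sub>R (kr *\<^sub>R m') = (1/kr) *\<^sub>R (e + ur *\<^sub>R p + vr *\<^sub>R q)" by simp
    then have m'eq: "m' = (1/kr) *\<^sub>R e + (ur/kr) *\<^sub>R p + (vr/kr) *\<^sub>R q"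
      using kr2 by (simp add: scaleR_add_right)
    have nm': "n \<bullet> m' = c0 / kr" unfolding m'eq c0_def using np
      by (simp add: inner_add_right)
    have m'P: "m' \<in> P"
    proof (cases "vr \<ge> 0")
      case True
      define A where "A = (kr - 1 - vr + ur)/(2 * kr)"
      define G where "G = (kr - 1 - vr - ur)/(2 * kr)"
      have kp: "kr > 0" using kr2 by simp
      have nn: "0 \<le> 1/kr" "0 \<le> A" "0 \<le> vr/kr" "0 \<le> G"
        unfolding A_def G_def using kp True ineq by (auto intro!: divide_nonneg_pos)
      have sm: "1/kr + A + vr/kr + G = 1" unfolding A_def G_def using kp by (simp add: field_simps)
      have "(1/kr) *\<^sub>R e + A *\<^sub>R p + (vr/kr) *\<^sub>R q + G *\<^sub>R (-p) \<in> P"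
        by (rule conv4) (use cP inP mpP nn sm in auto)
      moreover have "(1/kr) *\<^sub>R e + A *\<^sub>R p + (vr/kr) *\<^sub>R q + G *\<^sub>R (-p) = m'"
      proof -
        have "A - G = ur/kr" unfolding A_def G_def using kp by (simp add: field_simps)
        moreover have "(1/kr) *\<^sub>R e + A *\<^sub>R p + (vr/kr) *\<^sub>R q + G *\<^sub>R (-p) = (1/kr) *\<^sub>R e + (A - G) *\<^sub>R p + (vr/kr) *\<^sub>R q"
          by (simp add: algebra_simps)
        ultimately show ?thesis unfolding m'eq by simp
      qed
      ultimately show ?thesis by simp
    next
      case False
      define A where "A = (kr - 1 + ur)/(2 * kr)"
      define G where "G = (kr - 1 + 2 * vr - ur)/(2 * kr)"
      have kp: "kr > 0" using kr2 by simp
      have "vr/kr \<le> 0" using kp False by (simp add: divide_nonpos_pos)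
      then have nn: "0 \<le> 1/kr" "0 \<le> A" "0 \<le> G" "0 \<le> -vr/kr"
        unfolding A_def G_def using kp False ineq by (auto intro!: divide_nonneg_pos)
      have sm: "1/kr + A + G + -vr/kr = 1" unfolding A_def G_def using kp by (simp add: field_simps)
      have "(1/kr) *\<^sub>R e + A *\<^sub>R p + G *\<^sub>R (-p) + (-vr/kr) *\<^sub>R r \<in> P"
        by (rule conv4) (use cP inP mpP nn sm in auto)
      moreover have "(1/kr) *\<^sub>R e + A *\<^sub>R p + G *\<^sub>R (-p) + (-vr/kr) *\<^sub>R r = m'"
      proof -
        have "A - G + vr/kr = ur/kr" unfolding A_def G_def using kp by (simp add: field_simps)
        moreover have "(1/kr) *\<^sub>R e + A *\<^sub>R p + G *\<^sub>R (-p) + (-vr/kr) *\<^sub>R r = (1/kr) *\<^sub>R e + (A - G + vr/kr) *\<^sub>R p + (vr/kr) *\<^sub>R q"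
          unfolding r_def by (simp add: algebra_simps)
        ultimately show ?thesis unfolding m'eq by simp
      qed
      ultimately show ?thesis by simp
    qed
    have "0 < n \<bullet> m'" "n \<bullet> m' < c0" unfolding nm' using c0 kr2 by (auto simp: field_simps)
    then show ?thesis using M1[OF m'P m'L] by blast
  qed
qed


lemma core4:
  fixes P :: "(real^3) set" and p q e :: "real^3"
  assumes mf: "minimal_fano P"
    and PS: "P = convex hull {p, q, -p-q, e, -(2 *\<^sub>R p) - e}"
    and ve: "e \<in> vertices P"
    and lat: "p \<in> lattice3" "q \<in> lattice3" "e \<in> lattice3"
    and ind: "\<And>s t. s *\<^sub>R p + t *\<^sub>R q = 0 \<Longrightarrow> s = 0 \<and> t = 0"
    and sat: "\<And>x s t. x \<in> lattice3 \<Longrightarrow> x = s *\<^sub>R p + t *\<^sub>R q \<Longrightarrow> s \<in> \<int> \<and> t \<in> \<int>"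
    and ne: "cross3 p q \<bullet> e \<noteq> 0"
  shows "\<forall>x\<in>lattice3. \<exists>i j l. i \<in> \<int> \<and> j \<in> \<int> \<and> l \<in> \<int> \<and> x = i *\<^sub>R p + j *\<^sub>R e + l *\<^sub>R q"
proof (cases "cross3 p q \<bullet> e > 0")
  case True
  then show ?thesis using core4_gen[OF mf PS ve lat ind sat, where n="cross3 p q"] by simp
next
  case False
  then have "cross3 q p \<bullet> e > 0" using ne cross_skew[of q p] by (auto simp: inner_minus_left)
  then show ?thesis using core4_gen[OF mf PS ve lat ind sat, where n="cross3 q p"] by simp
qed



lemma mat_rows_mult:
  fixes u v w :: "real^3"
  shows "(\<chi> i. vector [u$i, v$i, w$i] :: real^3^3) *v y = y$1 *\<^sub>R u + y$2 *\<^sub>R v + y$3 *\<^sub>R w"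
  by (simp add: vec_eq_iff matrix_vector_mult_def sum_3 vector_3 algebra_simps)

lemma int_det3:
  fixes M :: "real^3^3"
  assumes "\<And>i j. M$i$j \<in> \<int>"
  shows "det M \<in> \<int>"
  unfolding det_3 using assms by (intro Ints_add Ints_diff Ints_mult) auto

lemma final_matrix:
  fixes p q e :: "real^3"
  assumes sp: "\<forall>x\<in>lattice3. \<exists>i j l. i \<in> \<int> \<and> j \<in> \<int> \<and> l \<in> \<int> \<and> x = i *\<^sub>R p + j *\<^sub>R e + l *\<^sub>R q"
    and lat: "p \<in> lattice3" "e \<in> lattice3" "q \<in> lattice3"
  shows "\<exists>A\<in>GL3Z. A *v p = vector[1,0,0] \<and> A *v e = vector[0,1,0] \<and> A *v q = vector[0,0,1]"
proof -
  have "\<forall>j::3. \<exists>t::real^3. t$1 \<in> \<int> \<and> t$2 \<in> \<int> \<and> t$3 \<in> \<int> \<and> axis j 1 = t$1 *\<^sub>R p + t$2 *\<^sub>R e + t$3 *\<^sub>R q"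
  proof
    fix j :: 3
    have "axis j (1::real) \<in> lattice3" unfolding lattice3_def by (auto simp: axis_def)
    then obtain i k l where "i \<in> \<int>" "k \<in> \<int>" "l \<in> \<int>" "axis j 1 = i *\<^sub>R p + k *\<^sub>R e + l *\<^sub>R q"
      using sp by blast
    then show "\<exists>t::real^3. t$1 \<in> \<int> \<and> t$2 \<in> \<int> \<and> t$3 \<in> \<int> \<and> axis j 1 = t$1 *\<^sub>R p + t$2 *\<^sub>R e + t$3 *\<^sub>R q"
      by (intro exI[of _ "vector [i,k,l]"]) (simp add: vector_3)
  qed
  then obtain c :: "3 \<Rightarrow> real^3" where c: "\<And>j. (c j)$1 \<in> \<int> \<and> (c j)$2 \<in> \<int> \<and> (c j)$3 \<in> \<int> \<and> axis j 1 = (c j)$1 *\<^sub>R p + (c j)$2 *\<^sub>R e + (c j)$3 *\<^sub>R q"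
    by metis
  define A :: "real^3^3" where "A = (\<chi> i. vector [(c 1)$i, (c 2)$i, (c 3)$i])"
  define B :: "real^3^3" where "B = (\<chi> i. vector [p$i, e$i, q$i])"
  have Bv: "B *v y = y$1 *\<^sub>R p + y$2 *\<^sub>R e + y$3 *\<^sub>R q" for y unfolding B_def by (rule mat_rows_mult)
  have Av: "A *v y = y$1 *\<^sub>R c 1 + y$2 *\<^sub>R c 2 + y$3 *\<^sub>R c 3" for y unfolding A_def by (rule mat_rows_mult)
  have Bc: "B *v c j = axis j 1" for j using c[of j] Bv by simp
  have BA: "B ** A = mat 1"
  proof -
    have "(B ** A) *v x = mat 1 *v x" for x
    proof -
      have "(B ** A) *v x = B *v (A *v x)" by (simp add: matrix_vector_mul_assoc)
      also have "\<dots> = x$1 *\<^sub>R (B *v c 1) + x$2 *\<^sub>R (B *v c 2) + x$3 *\<^sub>R (B *v c 3)"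
        unfolding Av by (simp add: matrix_vector_right_distrib matrix_vector_mult_scaleR)
      also have "\<dots> = x" unfolding Bc by (simp add: vec_eq_iff forall_3 axis_def)
      finally show ?thesis by simp
    qed
    then show ?thesis by (simp add: matrix_eq)
  qed
  then have AB: "A ** B = mat 1" by (simp add: matrix_left_right_inverse)
  have img: "A *v p = axis 1 1" "A *v e = axis 2 1" "A *v q = axis 3 1"
  proof -
    have "p = B *v axis 1 1" "e = B *v axis 2 1" "q = B *v axis 3 1"
      unfolding Bv by (simp_all add: axis_def)
    then show "A *v p = axis 1 1" "A *v e = axis 2 1" "A *v q = axis 3 1"
      by (metis AB matrix_vector_mul_assoc matrix_vector_mul_lid)+
  qed
  have Aint: "A$i$j \<in> \<int>" for i j
  proof -
    have "(c k)$i \<in> \<int>" for k using c[of k] exhaust_3[of i] by auto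
    then show ?thesis unfolding A_def using exhaust_3[of j] by (auto simp: vector_3)
  qed
  have Bint: "B$i$j \<in> \<int>" for i j
    unfolding B_def using lat unfolding lattice3_def using exhaust_3[of j] by (auto simp: vector_3)
  obtain a where a: "det A = of_int a" using int_det3[OF Aint] by (auto elim: Ints_cases)
  obtain b where b: "det B = of_int b" using int_det3[OF Bint] by (auto elim: Ints_cases)
  have "det A * det B = 1" using AB by (metis det_I det_mul)
  then have "a * b = 1" using a b by (metis of_int_eq_1_iff of_int_mult)
  then have "\<bar>a\<bar> = 1" by (auto simp: zmult_eq_1_iff)
  then have "\<bar>det A\<bar> = 1" using a by simp
  then have "A \<in> GL3Z" unfolding GL3Z_def using Aint by auto
  moreover have "axis 1 1 = (vector [1,0,0] :: real^3)" "axis 2 1 = (vector [0,1,0] :: real^3)"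
    "axis 3 1 = (vector [0,0,1] :: real^3)"
    by (simp_all add: vec_eq_iff forall_3 axis_def vector_3)
  ultimately show ?thesis using img by auto
qed



lemma rot:
  fixes a b :: "real^3"
  assumes ind: "\<And>s t. s *\<^sub>R a + t *\<^sub>R b = 0 \<Longrightarrow> s = 0 \<and> t = 0"
    and sat: "\<And>x s t. x \<in> lattice3 \<Longrightarrow> x = s *\<^sub>R a + t *\<^sub>R b \<Longrightarrow> s \<in> \<int> \<and> t \<in> \<int>"
  shows "\<And>s t. s *\<^sub>R b + t *\<^sub>R (-a-b) = 0 \<Longrightarrow> s = 0 \<and> t = 0"
    and "\<And>x s t. x \<in> lattice3 \<Longrightarrow> x = s *\<^sub>R b + t *\<^sub>R (-a-b) \<Longrightarrow> s \<in> \<int> \<and> t \<in> \<int>"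
    and "cross3 b (-a-b) = cross3 a b"
proof -
  fix s t assume h: "s *\<^sub>R b + t *\<^sub>R (-a-b) = 0"
  then have "(-t) *\<^sub>R a + (s - t) *\<^sub>R b = 0" by (simp add: algebra_simps)
  from ind[OF this] show "s = 0 \<and> t = 0" by simp
next
  fix x s t assume x: "x \<in> lattice3" "x = s *\<^sub>R b + t *\<^sub>R (-a-b)"
  then have "x = (-t) *\<^sub>R a + (s - t) *\<^sub>R b" by (simp add: algebra_simps)
  from sat[OF x(1) this] have "-t \<in> \<int>" "s - t \<in> \<int>" by auto
  then have "t \<in> \<int>" "s \<in> \<int>" by (metis minus_minus Ints_minus, metis diff_add_cancel Ints_add minus_minus Ints_minus)
  then show "s \<in> \<int> \<and> t \<in> \<int>" by simp
next
  show "cross3 b (-a-b) = cross3 a b"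
    by (simp add: cross3_def vec_eq_iff forall_3 vector_3 algebra_simps)
qed

lemma bint3:
  fixes p q r ya yb yc :: "real^3" and X :: "(real^3) set"
  assumes ind: "\<And>s t. s *\<^sub>R p + t *\<^sub>R q = 0 \<Longrightarrow> s = 0 \<and> t = 0"
    and lam: "la > 0" "mu > 0" and r: "r = - (la *\<^sub>R p) - mu *\<^sub>R q"
    and X: "p \<in> X" "q \<in> X" "r \<in> X" "ya \<in> X" "yb \<in> X" "yc \<in> X"
    and kb: "ka > 0" "kb > 0"
    and v3: "cross3 p q \<bullet> yc = - ka * (cross3 p q \<bullet> ya) - kb * (cross3 p q \<bullet> yb)"
    and nz: "\<not> (cross3 p q \<bullet> ya = 0 \<and> cross3 p q \<bullet> yb = 0)"
  shows "0 \<in> interior (convex hull X)"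
proof -
  let ?v1 = "cross3 p q \<bullet> ya" and ?v2 = "cross3 p q \<bullet> yb" and ?v3 = "cross3 p q \<bullet> yc"
  have B: "0 \<in> interior (convex hull X)" if "y \<in> X" "z \<in> X" "cross3 p q \<bullet> y < 0" "cross3 p q \<bullet> z > 0" for y z
    using bint[OF ind lam r that(3) that(4) X(1-3) that(1) that(2)] .
  consider "?v1 > 0" "?v2 < 0" | "?v1 > 0" "?v3 < 0" | "?v1 < 0" "?v2 > 0" | "?v1 < 0" "?v3 > 0"
    | "?v2 > 0" "?v3 < 0" | "?v2 < 0" "?v3 > 0"
  proof -
    have "ka * ?v1 > 0" if "?v1 > 0" using that kb by simp
    moreover have "ka * ?v1 < 0" if "?v1 < 0" using that kb by (simp add: mult_pos_neg)
    moreover have "kb * ?v2 \<ge> 0" if "?v2 \<ge> 0" using that kb by simp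
    moreover have "kb * ?v2 \<le> 0" if "?v2 \<le> 0" using that kb by (simp add: mult_nonneg_nonpos)
    moreover have "kb * ?v2 > 0" if "?v2 > 0" using that kb by simp
    moreover have "kb * ?v2 < 0" if "?v2 < 0" using that kb by (simp add: mult_pos_neg)
    ultimately show ?thesis using that v3 nz by (cases "?v1 > 0"; cases "?v1 < 0"; cases "?v2 > 0"; cases "?v2 < 0") force+
  qed
  then show ?thesis using B X by metis
qed

lemma step5:
  fixes p q e :: "real^3" and A :: "real^3^3"
  assumes PS: "P = convex hull {p, q, -p-q, e, -(2 *\<^sub>R p) - e}"
    and img: "A *v p = vector[1,0,0]" "A *v e = vector[0,1,0]" "A *v q = vector[0,0,1]"
  shows "(\<lambda>x. A *v x) ` P = convex hull {vector [1,0,0], vector [0,1,0], vector [0,0,1],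
                        vector [-2,-1,0], vector [-1,0,-1]}"
proof -
  have lin: "linear (\<lambda>x. A *v x)" by (rule matrix_vector_mul_linear)
  have neg: "A *v (-x) = -(A *v x)" for x
    by (simp add: vec_eq_iff matrix_vector_mult_def sum_negf)
  have r: "A *v (-p-q) = vector [-1,0,-1]"
    using img by (simp add: matrix_vector_mult_diff_distrib neg vec_eq_iff forall_3 vector_3)
  have g: "A *v (-(2 *\<^sub>R p) - e) = vector [-2,-1,0]"
    using img by (simp add: matrix_vector_mult_diff_distrib neg matrix_vector_mult_scaleR vec_eq_iff forall_3 vector_3)
  have "(\<lambda>x. A *v x) ` P = convex hull ((\<lambda>x. A *v x) ` {p, q, -p-q, e, -(2 *\<^sub>R p) - e})"
    unfolding PS by (rule convex_hull_linear_image[OF lin])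
  also have "(\<lambda>x. A *v x) ` {p, q, -p-q, e, -(2 *\<^sub>R p) - e} = {vector [1,0,0], vector [0,1,0], vector [0,0,1],
                        vector [-2,-1,0], vector [-1,0,-1]}"
    using img r g by auto
  finally show ?thesis .
qed



theorem lemma4p12:
  fixes P L1 L2 T1 T2 :: "(real^3) set" and f1 f2 :: "real^2 \<Rightarrow> real^3"
  assumes "minimal_fano P"
    and "subspace L1" "dim L1 = 2" "subspace L2" "dim L2 = 2" "L1 \<noteq> L2"
    and "lattice_iso_onto f1 L1" "lattice_iso_onto f2 L2"
    and "T1 = f1 ` (convex hull {vector [1,0], vector [0,1], vector [-1,-1]})"
    and "T2 = f2 ` (convex hull {vector [1,0], vector [0,1], vector [-2,-1]})"
    and "f1 ` {vector [1,0], vector [0,1], vector [-1,-1]} \<subseteq> vertices P"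
    and "f2 ` {vector [1,0], vector [0,1], vector [-2,-1]} \<subseteq> vertices P"
  shows "\<exists>A\<in>GL3Z. (\<lambda>x. A *v x) ` P =
           convex hull {vector [1,0,0], vector [0,1,0], vector [0,0,1],
                        vector [-2,-1,0], vector [-1,0,-1]}"
proof -
  note mf = assms(1)
  define a where "a = f1 (vector [1,0])"
  define b where "b = f1 (vector [0,1])"
  define d where "d = f2 (vector [1,0])"
  define e where "e = f2 (vector [0,1])"
  note S1 = tri_setup[OF assms(2,3,7), folded a_def b_def]
  note S2 = tri_setup[OF assms(4,5,8), folded d_def e_def]
  define c where "c = -a-b"
  define g where "g = -(2 *\<^sub>R d) - e"
  have fc: "f1 (vector [-1,-1]) = c" unfolding c_def using S1(6)[of "vector [-1,-1]"] by (simp add: vector_2)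
  have fg: "f2 (vector [-2,-1]) = g" unfolding g_def using S2(6)[of "vector [-2,-1]"] by (simp add: vector_2)
  have vert: "a \<in> vertices P" "b \<in> vertices P" "c \<in> vertices P" "d \<in> vertices P" "e \<in> vertices P" "g \<in> vertices P"
    using assms(11,12) fc fg unfolding a_def b_def d_def e_def by auto
  have vP: "x \<in> P" if "x \<in> vertices P" for x using that unfolding vertices_def extreme_point_of_def by auto
  have lat: "a \<in> lattice3" "b \<in> lattice3" "c \<in> lattice3" "d \<in> lattice3" "e \<in> lattice3" "g \<in> lattice3"
    using S1(1,2) S2(1,2) unfolding c_def g_def
    by (auto intro!: lattice3_diff lattice3_uminus lattice3_scale[of 2, simplified])
  have PL: "a \<in> P \<inter> lattice3" "b \<in> P \<inter> lattice3" "c \<in> P \<inter> lattice3" "d \<in> P \<inter> lattice3"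
    "e \<in> P \<inter> lattice3" "g \<in> P \<inter> lattice3"
    using vert vP lat by auto
  define n1 where "n1 = cross3 a b"
  define n2 where "n2 = cross3 d e"
  have n1z: "n1 \<noteq> 0" unfolding n1_def by (rule cross_nz[OF S1(3)])
  have n2z: "n2 \<noteq> 0" unfolding n2_def by (rule cross_nz[OF S2(3)])
  have n1abc: "n1 \<bullet> a = 0" "n1 \<bullet> b = 0" "n1 \<bullet> c = 0"
    unfolding n1_def c_def by (simp_all add: cross_dot_p inner_diff_right)
  have n2deg: "n2 \<bullet> d = 0" "n2 \<bullet> e = 0" "n2 \<bullet> g = 0"
    unfolding n2_def g_def by (simp_all add: cross_dot_p inner_diff_right)
  have n1g: "n1 \<bullet> g = - 2 * (n1 \<bullet> d) - n1 \<bullet> e" unfolding g_def by (simp add: inner_diff_right)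
  have n2c: "n2 \<bullet> c = - (n2 \<bullet> a) - n2 \<bullet> b" unfolding c_def by (simp add: inner_diff_right)
  have F1: "\<not> (n1 \<bullet> d = 0 \<and> n1 \<bullet> e = 0)"
  proof
    assume h: "n1 \<bullet> d = 0 \<and> n1 \<bullet> e = 0"
    have dL: "d \<in> L1" "e \<in> L1"
      using in_plane[of a b d] in_plane[of a b e] h n1z S1(4) unfolding n1_def by metis+
    have "L2 \<subseteq> L1"
    proof
      fix x assume "x \<in> L2"
      then obtain s t where "x = s *\<^sub>R d + t *\<^sub>R e" using S2(4) by blast
      then show "x \<in> L1" using dL assms(2) by (simp add: subspace_add subspace_scale)
    qed
    then have "L2 = L1" using assms(2-5) by (intro subspace_dim_equal) auto
    then show False using assms(6) by simp
  qed
  have F2: "\<not> (n2 \<bullet> a = 0 \<and> n2 \<bullet> b = 0)"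
  proof
    assume h: "n2 \<bullet> a = 0 \<and> n2 \<bullet> b = 0"
    have dL: "a \<in> L2" "b \<in> L2"
      using in_plane[of d e a] in_plane[of d e b] h n2z S2(4) unfolding n2_def by metis+
    have "L1 \<subseteq> L2"
    proof
      fix x assume "x \<in> L1"
      then obtain s t where "x = s *\<^sub>R a + t *\<^sub>R b" using S1(4) by blast
      then show "x \<in> L2" using dL assms(4) by (simp add: subspace_add subspace_scale)
    qed
    then have "L1 = L2" using assms(2-5) by (intro subspace_dim_equal) auto
    then show False using assms(6) by simp
  qed
  have rc: "c = - (1 *\<^sub>R a) - 1 *\<^sub>R b" unfolding c_def by simp
  have rg: "g = - (2 *\<^sub>R d) - 1 *\<^sub>R e" unfolding g_def by simp
  \<comment> \<open>Step 1: P is the convex hull of the six points\<close>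
  define S where "S = {a, b, c, d, e, g}"
  have int0: "0 \<in> interior (convex hull S)"
    apply (rule bint3[OF S1(3), where la=1 and mu=1 and r=c and X=S and ya=d and yb=e and yc=g and ka=2 and kb=1])
    using rc n1g F1 by (auto simp: S_def n1_def)
  have vS: "vertices P \<subseteq> S"
  proof
    fix x assume x: "x \<in> vertices P"
    show "x \<in> S"
    proof (rule ccontr)
      assume "x \<notin> S"
      then show False using rem[OF mf x _ _ int0] PL unfolding S_def by auto
    qed
  qed
  obtain V where V: "finite V" "P = convex hull V"
    using mf unfolding minimal_fano_def fano_polytope_def by auto
  have cP: "convex P" "compact P" using V by (auto simp: finite_imp_compact_convex_hull)
  have PS: "P = convex hull S"
  proof
    have "P = convex hull {x. x extreme_point_of P}" by (rule Krein_Milman_Minkowski[OF cP(2,1)])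
    also have "\<dots> \<subseteq> convex hull S" using vS unfolding vertices_def by (intro hull_mono) auto
    finally show "P \<subseteq> convex hull S" .
    show "convex hull S \<subseteq> P" using PL cP unfolding S_def by (intro hull_minimal) auto
  qed
  \<comment> \<open>Step 2: a shared vertex\<close>
  have kill2: False if x: "x \<in> vertices P" "x \<notin> {d, e, g}" and yz: "y \<in> P \<inter> lattice3" "z \<in> P \<inter> lattice3"
    "x \<noteq> y" "x \<noteq> z" "n2 \<bullet> y < 0" "0 < n2 \<bullet> z" for x y z
  proof -
    have "0 \<in> interior (convex hull {d, e, g, y, z})"
      by (rule bint[OF S2(3) _ _ rg]) (use yz in \<open>auto simp: n2_def\<close>)
    then show False using rem[OF mf x(1), of "{d, e, g, y, z}"] x yz PL by auto
  qed
  have abc_dist: "a \<noteq> b" "a \<noteq> c" "b \<noteq> c"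
  proof -
    show "a \<noteq> b"
    proof
      assume "a = b" then have "1 *\<^sub>R a + (-1) *\<^sub>R b = 0" by simp
      from S1(3)[OF this] show False by simp
    qed
    show "a \<noteq> c"
    proof
      assume h: "a = c"
      have "2 *\<^sub>R a + 1 *\<^sub>R b = a - c" unfolding c_def by (simp add: scaleR_2 algebra_simps)
      then have "2 *\<^sub>R a + 1 *\<^sub>R b = 0" using h by simp
      from S1(3)[OF this] show False by simp
    qed
    show "b \<noteq> c"
    proof
      assume h: "b = c"
      have "1 *\<^sub>R a + 2 *\<^sub>R b = b - c" unfolding c_def by (simp add: scaleR_2 algebra_simps)
      then have "1 *\<^sub>R a + 2 *\<^sub>R b = 0" using h by simp
      from S1(3)[OF this] show False by simp
    qed
  qed
  have shared: "\<exists>x\<in>{a, b, c}. x \<in> {d, e, g}"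
  proof (rule ccontr)
    assume ns: "\<not> ?thesis"
    have "n2 \<bullet> a + n2 \<bullet> b + n2 \<bullet> c = 0" using n2c by simp
    from sign3[OF this F2] show False
      using kill2[OF vert(1) _ PL(2) PL(3)] kill2[OF vert(1) _ PL(3) PL(2)]
        kill2[OF vert(2) _ PL(1) PL(3)] kill2[OF vert(2) _ PL(3) PL(1)]
        kill2[OF vert(3) _ PL(1) PL(2)] kill2[OF vert(3) _ PL(2) PL(1)] ns abc_dist
      by auto
  qed
  \<comment> \<open>Step 3: the shared vertex is d\<close>
  have mdP: "-d \<in> P \<inter> lattice3"
  proof -
    have "(1/2) *\<^sub>R e + (1/2) *\<^sub>R g \<in> P" by (rule convexD) (use cP PL in auto)
    moreover have "(1/2) *\<^sub>R e + (1/2) *\<^sub>R g = - d" unfolding g_def by (simp add: algebra_simps)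
    ultimately show ?thesis using lat by (auto intro: lattice3_uminus)
  qed
  have kill3: False if x: "x \<in> vertices P" "x \<notin> {a, b, c, d, -d}" "n1 \<bullet> d \<noteq> 0" for x
  proof -
    have "0 \<in> interior (convex hull {a, b, c, d, -d})"
    proof (cases "n1 \<bullet> d > 0")
      case True
      show ?thesis
        by (rule bint[OF S1(3), where la=1 and mu=1 and r=c and y="-d" and z=d]) (use True in \<open>auto simp: n1_def c_def\<close>)
    next
      case False
      then have "n1 \<bullet> d < 0" using x(3) by simp
      show ?thesis
        by (rule bint[OF S1(3), where la=1 and mu=1 and r=c and y=d and z="-d"]) (use \<open>n1 \<bullet> d < 0\<close> in \<open>auto simp: n1_def c_def\<close>)
    qed
    then show False using rem[OF mf x(1), of "{a, b, c, d, -d}"] x PL mdP by auto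
  qed
  have "e \<notin> {a, b, c}"
  proof
    assume h: "e \<in> {a, b, c}"
    then have "n1 \<bullet> e = 0" using n1abc by auto
    then have nd: "n1 \<bullet> d \<noteq> 0" using F1 by auto
    have "g \<notin> {a, b, c, d, -d}" using n1abc n1g nd \<open>n1 \<bullet> e = 0\<close> by auto
    then show False using kill3[OF vert(6) _ nd] by simp
  qed
  moreover have "g \<notin> {a, b, c}"
  proof
    assume h: "g \<in> {a, b, c}"
    then have "n1 \<bullet> g = 0" using n1abc by auto
    then have ne: "n1 \<bullet> e = - 2 * (n1 \<bullet> d)" using n1g by simp
    then have nd: "n1 \<bullet> d \<noteq> 0" using F1 by auto
    have "e \<notin> {a, b, c, d, -d}" using n1abc ne nd by auto
    then show False using kill3[OF vert(5) _ nd] by simp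
  qed
  ultimately have dabc: "d \<in> {a, b, c}" using shared by auto
  have ne: "n1 \<bullet> e \<noteq> 0" using F1 dabc n1abc by auto
  \<comment> \<open>Step 4 and 5\<close>
  have fin: "\<exists>A\<in>GL3Z. (\<lambda>x. A *v x) ` P =
           convex hull {vector [1,0,0], vector [0,1,0], vector [0,0,1],
                        vector [-2,-1,0], vector [-1,0,-1]}"
    if PS': "P = convex hull {p, q, -p-q, e, -(2 *\<^sub>R p) - e}"
      and pq: "p \<in> lattice3" "q \<in> lattice3"
      and ind: "\<And>s t. s *\<^sub>R p + t *\<^sub>R q = 0 \<Longrightarrow> s = 0 \<and> t = 0"
      and sat: "\<And>x s t. x \<in> lattice3 \<Longrightarrow> x = s *\<^sub>R p + t *\<^sub>R q \<Longrightarrow> s \<in> \<int> \<and> t \<in> \<int>"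
      and nn: "cross3 p q \<bullet> e \<noteq> 0" for p q
  proof -
    have "\<forall>x\<in>lattice3. \<exists>i j l. i \<in> \<int> \<and> j \<in> \<int> \<and> l \<in> \<int> \<and> x = i *\<^sub>R p + j *\<^sub>R e + l *\<^sub>R q"
      by (rule core4[OF mf PS' vert(5) pq lat(5) ind sat nn])
    then obtain A where A: "A \<in> GL3Z" "A *v p = vector[1,0,0]" "A *v e = vector[0,1,0]" "A *v q = vector[0,0,1]"
      using final_matrix[of p e q] pq lat(5) by blast
    show ?thesis using step5[OF PS' A(2-4)] A(1) by blast
  qed
  note R1 = rot[of a b, OF S1(3) S1(5)]
  have R1': "\<And>s t. s *\<^sub>R b + t *\<^sub>R c = 0 \<Longrightarrow> s = 0 \<and> t = 0"
    "\<And>x s t. x \<in> lattice3 \<Longrightarrow> x = s *\<^sub>R b + t *\<^sub>R c \<Longrightarrow> s \<in> \<int> \<and> t \<in> \<int>"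
    "cross3 b c = n1"
    using R1 unfolding c_def n1_def by auto
  note R2 = rot[of b c, OF R1'(1) R1'(2)]
  have mbc: "-b-c = a" unfolding c_def by simp
  have R2': "\<And>s t. s *\<^sub>R c + t *\<^sub>R a = 0 \<Longrightarrow> s = 0 \<and> t = 0"
    "\<And>x s t. x \<in> lattice3 \<Longrightarrow> x = s *\<^sub>R c + t *\<^sub>R a \<Longrightarrow> s \<in> \<int> \<and> t \<in> \<int>"
    "cross3 c a = n1"
    using R2 R1'(3) unfolding mbc by auto
  have "d = a \<or> d = b \<or> d = c" using dabc by auto
  then show ?thesis
  proof (elim disjE)
    assume da: "d = a"
    have "S = {a, b, -a-b, e, -(2 *\<^sub>R a) - e}" unfolding S_def c_def g_def da by auto
    then show ?thesis using fin[of a b] PS lat S1(3) S1(5) ne unfolding n1_def by auto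
  next
    assume db: "d = b"
    have "S = {b, c, -b-c, e, -(2 *\<^sub>R b) - e}" unfolding S_def mbc g_def db by auto
    then show ?thesis using fin[of b c] PS lat R1' ne by auto
  next
    assume dc: "d = c"
    have mca: "-c-a = b" unfolding c_def by simp
    have "S = {c, a, -c-a, e, -(2 *\<^sub>R c) - e}" unfolding S_def mca g_def dc by auto
    then show ?thesis using fin[of c a] PS lat R2' ne by auto
  qed
qed


end
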